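(* Let $\mathcal{X},\mathcal{Y}$ be finite, $P_{Y|X}$ a channel, $m$ a positive integer, $P_{\bar X}$ an $m$-type on $\mathcal{X}$, $P_{\bar XY}=P_{\bar X}P_{Y|X}$, $R\ge0$, and $M=\exp(nR)$, with $n$ ranging over multiples of $m$. For a conditional type $Q_{\bar Y|\bar X}\in\mathcal{P}_n(\mathcal{Y}|P_{\bar X})$ let $(\bar X,\bar Y)\sim P_{\bar X}Q_{\bar Y|\bar X}$ and $Q_{\bar Y}$ the $\mathcal{Y}$-marginal. Then \[ \lim_{n\to\infty}-\frac1n\log\max_{Q_{\bar Y|\bar X}\in\mathcal{P}_n(\mathcal{Y}|P_{\bar X})}\Big\{\tfrac12|\mathcal{T}^n_{Q_{\bar Y}}|\exp\big(-n\,\mathbb{E}[\imath_{P_{Y|X}}(\bar Y|\bar X)]\big)\breve{\mathfrak{Y}}(M,P_{\bar X}Q_{\bar Y|\bar X})\Big\} =\inf_{Q_{\bar Y|\bar X}\in\mathcal{P}_\infty(\mathcal{Y}|P_{\bar X})}\Big\{D(P_{\bar X}Q_{\bar Y|\bar X}\|P_{\bar XY})+\tfrac12\big[R-D(P_{\bar X}Q_{\bar Y|\bar X}\|P_{\bar X}Q_{\bar Y})\big]_+\Big\}, \] where $\mathcal{P}_\infty(\mathcal{Y}|P_{\bar X})=\bigcup_{n\in m\mathbb{N}}\mathcal{P}_n(\mathcal{Y}|P_{\bar X})$ and $[f]_+=\max\{0,f\}$.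
   Context: Logs and exps use a common base; $D$ is relative entropy; $\imath_{P_{Y|X}}(y|x)=\log\frac1{P_{Y|X}(y|x)}$. $\mathcal{T}^n_Q$ is the type class of an $n$-type $Q$. $\mathcal{P}_n(\mathcal{Y}|P_{\bar X})$ is the set of conditional types $Q_{\bar Y|\bar X}$ of $y^n$ given a fixed $x^n\in\mathcal{T}^n_{P_{\bar X}}$ (i.e. $P_{\bar X}Q_{\bar Y|\bar X}$ is the joint empirical distribution of $(x^n,y^n)$ for some $y^n$). For such $Q_{\bar Y|\bar X}$ and $y^n\in\mathcal{T}^n_{Q_{\bar Y}}$, let $Q_{\bar X|\bar Y}$ be the conditional type with $Q_{\bar X|\bar Y}Q_{\bar Y}=P_{\bar X}Q_{\bar Y|\bar X}$, $\mathcal{T}^n_{Q_{\bar X|\bar Y}}(y^n)$ the set of $x^n$ whose joint empirical distribution with $y^n$ is $P_{\bar X}Q_{\bar Y|\bar X}$, $\breve p_{Q_{\bar X|\bar Y}}(y^n)=\mathbb{P}[\breve X^n\in\mathcal{T}^n_{Q_{\bar X|\bar Y}}(y^n)]$ with $\breve X^n$ uniform on $\mathcal{T}^n_{P_{\bar X}}$, and $\breve{\mathfrak{Y}}(M,P_{\bar X}Q_{\bar Y|\bar X})=\min\{2\breve p_{Q_{\bar X|\bar Y}}(y^n),M^{-1/2}\breve p^{1/2}_{Q_{\bar X|\bar Y}}(y^n)\}$ (depending on $y^n$ only through its type). *)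

theory Defs
  imports "HOL-Analysis.Analysis"
begin

definition ltype :: "'a list \<Rightarrow> 'a \<Rightarrow> real" where
  "ltype xs a = real (count_list xs a) / real (length xs)"

definition is_type :: "nat \<Rightarrow> ('a \<Rightarrow> real) \<Rightarrow> bool" where
  "is_type n P \<longleftrightarrow> (\<exists>xs. length xs = n \<and> P = ltype xs)"

definition typeclass_set :: "nat \<Rightarrow> ('a \<Rightarrow> real) \<Rightarrow> 'a list set" where
  "typeclass_set n P = {xs. length xs = n \<and> ltype xs = P}"

definition jtype :: "'x list \<Rightarrow> 'y list \<Rightarrow> ('x \<times> 'y) \<Rightarrow> real" where
  "jtype xs ys = ltype (zip xs ys)"

text \<open>Conditional types P_n(Y|P_X), each represented by the joint type P_X Q_{Y|X}
  it determines (the joint empirical distribution of (x^n,y^n) with x^n in T^n_P).\<close>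
definition cond_types :: "nat \<Rightarrow> ('x \<Rightarrow> real) \<Rightarrow> ('x \<times> 'y \<Rightarrow> real) set" where
  "cond_types n P = {jtype xs ys | xs ys. xs \<in> typeclass_set n P \<and> length ys = n}"

definition margY :: "('x \<times> 'y \<Rightarrow> real) \<Rightarrow> 'y \<Rightarrow> real" where
  "margY J y = (\<Sum>x\<in>UNIV. J (x, y))"

text \<open>breve p_{Q_{X|Y}}(y^n): probability that X^n uniform on T^n_P has joint type J with
  y^n, for a y^n of type Q_Y (the value does not depend on the choice of y^n).\<close>
definition breve_p :: "nat \<Rightarrow> ('x \<Rightarrow> real) \<Rightarrow> ('x \<times> 'y \<Rightarrow> real) \<Rightarrow> real" where
  "breve_p n P J =
     (let ys = (SOME ys. ys \<in> typeclass_set n (margY J)) in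
      real (card {xs. xs \<in> typeclass_set n P \<and> jtype xs ys = J}) / real (card (typeclass_set n P)))"

definition breve_Y :: "real \<Rightarrow> nat \<Rightarrow> ('x \<Rightarrow> real) \<Rightarrow> ('x \<times> 'y \<Rightarrow> real) \<Rightarrow> real" where
  "breve_Y M n P J = min (2 * breve_p n P J) (M powr (-1/2) * sqrt (breve_p n P J))"

text \<open>exp(-n E[i_W(Y|X)]) for (X,Y) ~ J, written as a product so that W = 0 is handled
  (exp(-infinity) = 0, and 0 * log 0 = 0).\<close>
definition chan_exp :: "nat \<Rightarrow> ('x \<Rightarrow> 'y \<Rightarrow> real) \<Rightarrow> ('x \<times> 'y \<Rightarrow> real) \<Rightarrow> real" where
  "chan_exp n W J = (\<Prod>(x,y)\<in>UNIV. if J (x,y) = 0 then 1 else W x y powr (real n * J (x,y)))"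

definition rel_ent :: "('a \<Rightarrow> real) \<Rightarrow> ('a \<Rightarrow> real) \<Rightarrow> ereal" where
  "rel_ent J K = (if \<exists>a. J a > 0 \<and> K a = 0 then \<infinity>
      else ereal (\<Sum>a\<in>UNIV. if J a = 0 then 0 else J a * ln (J a / K a)))"

definition lhs_term :: "('x \<Rightarrow> 'y \<Rightarrow> real) \<Rightarrow> real \<Rightarrow> nat \<Rightarrow> ('x \<Rightarrow> real) \<Rightarrow> ('x \<times> 'y \<Rightarrow> real) \<Rightarrow> real" where
  "lhs_term W R n P J = 1/2 * real (card (typeclass_set n (margY J))) * chan_exp n W J
      * breve_Y (exp (real n * R)) n P J"

end

theory Submission
  imports Defs "HOL-Combinatorics.Multiset_Permutations" "HOL-Combinatorics.Permutations" "HOL-Real_Asymp.Real_Asymp"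
begin


lemma sum_count_list: "(\<Sum>a\<in>(UNIV::'a::finite set). count_list xs a) = length xs"
proof (induction xs)
  case Nil then show ?case by simp
next
  case (Cons x xs)
  have "(\<Sum>a\<in>(UNIV::'a set). count_list (x#xs) a) = (\<Sum>a\<in>UNIV. (if x = a then 1 else 0) + count_list xs a)"
    by (intro sum.cong) auto
  also have "\<dots> = 1 + length xs" using Cons by (simp add: sum.distrib)
  finally show ?case by simp
qed

lemma sum_count_zip_fst:
  "length xs = length ys \<Longrightarrow> (\<Sum>y\<in>(UNIV::'y::finite set). count_list (zip xs ys) (x, y)) = count_list xs x"
proof (induction xs ys rule: list_induct2)
  case Nil then show ?case by simp
next
  case (Cons a xs b ys)
  have "(\<Sum>y\<in>(UNIV::'y set). count_list (zip (a#xs) (b#ys)) (x, y)) = (\<Sum>y\<in>UNIV. (if a = x \<and> b = y then 1 else 0) + count_list (zip xs ys) (x,y))"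
    by (intro sum.cong) auto
  also have "\<dots> = (if a = x then 1 else 0) + count_list xs x" using Cons by (simp add: sum.distrib)
  finally show ?case by simp
qed

lemma sum_count_zip_snd:
  "length xs = length ys \<Longrightarrow> (\<Sum>x\<in>(UNIV::'x::finite set). count_list (zip xs ys) (x, y)) = count_list ys y"
proof (induction xs ys rule: list_induct2)
  case Nil then show ?case by simp
next
  case (Cons a xs b ys)
  have "(\<Sum>x\<in>(UNIV::'x set). count_list (zip (a#xs) (b#ys)) (x, y)) = (\<Sum>x\<in>UNIV. (if b = y \<and> a = x then 1 else 0) + count_list (zip xs ys) (x,y))"
    by (intro sum.cong) auto
  also have "\<dots> = (if b = y then 1 else 0) + count_list ys y" using Cons by (simp add: sum.distrib)
  finally show ?case by simp
qed

lemma margY_jtype: fixes xs :: "'x::finite list" and ys :: "'y::finite list" assumes "length xs = length ys" shows "margY (jtype xs ys) = ltype ys"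
proof
  fix y
  have "margY (jtype xs ys) y = (\<Sum>x\<in>UNIV. real (count_list (zip xs ys) (x, y))) / real (length ys)"
    using assms by (simp add: margY_def jtype_def ltype_def sum_divide_distrib)
  also have "\<dots> = ltype ys y" using sum_count_zip_snd[OF assms, of y]
    by (simp add: ltype_def flip: of_nat_sum)
  finally show "margY (jtype xs ys) y = ltype ys y" .
qed

lemma margX_jtype: fixes xs :: "'x::finite list" and ys :: "'y::finite list" assumes "length xs = length ys" shows "(\<Sum>y\<in>UNIV. jtype xs ys (x, y)) = ltype xs x"
proof -
  have "(\<Sum>y\<in>UNIV. jtype xs ys (x, y)) = (\<Sum>y\<in>UNIV. real (count_list (zip xs ys) (x, y))) / real (length xs)"
    using assms by (simp add: jtype_def ltype_def sum_divide_distrib)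
  also have "\<dots> = ltype xs x" using sum_count_zip_fst[OF assms, of x]
    by (simp add: ltype_def flip: of_nat_sum)
  finally show ?thesis .
qed

lemma ltype_eq_iff:
  assumes "length xs = length ys" "length ys > 0"
  shows "ltype xs = ltype ys \<longleftrightarrow> mset xs = mset ys"
proof
  assume "ltype xs = ltype ys"
  then have "count_list xs a = count_list ys a" for a
    using assms by (auto simp: ltype_def fun_eq_iff)
  then show "mset xs = mset ys" by (simp add: multiset_eq_iff count_mset)
next
  assume "mset xs = mset ys"
  then have "count_list xs a = count_list ys a" for a by (metis count_mset)
  then show "ltype xs = ltype ys" using assms by (simp add: ltype_def fun_eq_iff)
qed

lemma typeclass_set_eq:
  assumes "length xs0 = n" "n > 0"
  shows "typeclass_set n (ltype xs0) = permutations_of_multiset (mset xs0)"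
  using assms ltype_eq_iff[of _ xs0]
  by (auto simp: typeclass_set_def permutations_of_multiset_def dest: mset_eq_length)

lemma real_card_typeclass:
  fixes xs0 :: "'a::finite list"
  assumes "length xs0 = n" "n > 0"
  shows "real (card (typeclass_set n (ltype xs0))) * (\<Prod>a\<in>UNIV. fact (count_list xs0 a)) = fact n"
proof -
  let ?A = "mset xs0"
  have d: "(\<Prod>x\<in>set_mset ?A. fact (count ?A x) :: nat) dvd fact (size ?A)"
    by (rule card_permutations_of_multiset(2))
  have c: "card (typeclass_set n (ltype xs0)) = fact n div (\<Prod>x\<in>set_mset ?A. fact (count ?A x))"
    using typeclass_set_eq[OF assms] card_permutations_of_multiset(1)[of ?A] assms by simp
  have p: "(\<Prod>x\<in>set_mset ?A. fact (count ?A x) :: nat) = (\<Prod>a\<in>UNIV. fact (count_list xs0 a))"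
    unfolding count_mset by (rule prod.mono_neutral_left) (auto simp: count_eq_zero_iff)
  have "card (typeclass_set n (ltype xs0)) * (\<Prod>a\<in>UNIV. fact (count_list xs0 a)) = (fact n :: nat)"
    using c d p assms by simp
  then have "real (card (typeclass_set n (ltype xs0)) * (\<Prod>a\<in>UNIV. fact (count_list xs0 a))) = real (fact n :: nat)"
    by simp
  then show ?thesis by (simp add: of_nat_fact)
qed

lemma ln_card_typeclass:
  fixes xs0 :: "'a::finite list"
  assumes "length xs0 = n" "n > 0"
  shows "ln (real (card (typeclass_set n (ltype xs0)))) = ln (fact n) - (\<Sum>a\<in>UNIV. ln (fact (count_list xs0 a)))"
proof -
  have pos: "(\<Prod>a\<in>UNIV. fact (count_list xs0 a) :: real) > 0" by (intro prod_pos) auto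
  have "ln (fact n :: real) = ln (real (card (typeclass_set n (ltype xs0)))) + ln (\<Prod>a\<in>UNIV. fact (count_list xs0 a) :: real)"
    using real_card_typeclass[OF assms] pos by (metis fact_gt_zero less_irrefl ln_mult mult_eq_0_iff)
  moreover have "ln (\<Prod>a\<in>UNIV. fact (count_list xs0 a) :: real) = (\<Sum>a\<in>UNIV. ln (fact (count_list xs0 a)))"
    by (rule ln_prod) auto
  ultimately show ?thesis by simp
qed

lemma ln_fact_Suc_bounds:
  "real (Suc k) * ln (real (Suc k)) - real (Suc k) \<le> ln (fact (Suc k))
   \<and> ln (fact (Suc k)) \<le> real (Suc k) * ln (real (Suc k)) - real (Suc k) + 1 + ln (real (Suc k))"
proof (induction k)
  case 0 then show ?case by simp
next
  case (Suc k)
  define j where "j = real (Suc k)"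
  have j: "j \<ge> 1" by (simp add: j_def)
  have fs: "ln (fact (Suc (Suc k)) :: real) = ln (fact (Suc k)) + ln (j + 1)"
    by (simp add: j_def ln_mult fact_Suc [of "Suc k"] add.commute del: fact_Suc)
  have l1: "ln (j + 1) - ln j \<le> 1 / j"
    using ln_le_minus_one[of "(j+1)/j"] j by (simp add: ln_div field_simps)
  have l2: "ln (j + 1) - ln j \<ge> 1 / (j + 1)"
    using ln_le_minus_one[of "j/(j+1)"] j by (simp add: ln_div field_simps)
  have m1: "j * (ln (j + 1) - ln j) \<le> 1" using l1 j by (simp add: field_simps)
  have m2: "(j + 1) * (ln (j + 1) - ln j) \<ge> 1" using l2 j by (simp add: field_simps)
  have e: "real (Suc (Suc k)) = j + 1" by (simp add: j_def)
  show ?case using Suc.IH m1 m2 unfolding fs e j_def[symmetric]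
    by (auto simp: algebra_simps)
qed

lemma ln_fact_bounds:
  "real k * ln (real k) - real k \<le> ln (fact k)
   \<and> ln (fact k) \<le> real k * ln (real k) - real k + 1 + ln (real k + 1)"
proof (cases k)
  case 0 then show ?thesis by simp
next
  case (Suc j)
  have "ln (real k) \<le> ln (real k + 1)" using Suc by simp
  then show ?thesis using ln_fact_Suc_bounds[of j] unfolding Suc by linarith
qed

definition ent :: "('a::finite \<Rightarrow> real) \<Rightarrow> real" where
  "ent Q = - (\<Sum>a\<in>UNIV. Q a * ln (Q a))"

lemma n_ent_ltype:
  fixes xs0 :: "'a::finite list"
  assumes "length xs0 = n" "n > 0"
  shows "real n * ent (ltype xs0) = real n * ln (real n) - (\<Sum>a\<in>UNIV. real (count_list xs0 a) * ln (real (count_list xs0 a)))"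
proof -
  have "real n * ent (ltype xs0) = - (\<Sum>a\<in>UNIV. real (count_list xs0 a) * ln (real (count_list xs0 a) / real n))"
    using assms by (simp add: ent_def ltype_def sum_distrib_left)
  also have "\<dots> = - (\<Sum>a\<in>UNIV. real (count_list xs0 a) * ln (real (count_list xs0 a)) - real (count_list xs0 a) * ln (real n))"
    using assms by (intro arg_cong[where f=uminus] sum.cong) (auto simp: ln_div algebra_simps)
  also have "\<dots> = real n * ln (real n) - (\<Sum>a\<in>UNIV. real (count_list xs0 a) * ln (real (count_list xs0 a)))"
    using assms by (simp add: sum_subtractf sum_distrib_right[symmetric] sum_count_list flip: of_nat_sum)
  finally show ?thesis .
qed

definition errb :: "nat \<Rightarrow> nat \<Rightarrow> real" where
  "errb c n = (real c + 1) * (1 + ln (real n + 1))"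

lemma ln_card_tc:
  fixes xs0 :: "'a::finite list"
  assumes "length xs0 = n" "n > 0"
  shows "\<bar>ln (real (card (typeclass_set n (ltype xs0)))) - real n * ent (ltype xs0)\<bar> \<le> errb CARD('a) n"
proof -
  define c where "c a = count_list xs0 a" for a
  have sc: "(\<Sum>a\<in>UNIV. real (c a)) = real n" using sum_count_list[of xs0] assms
    by (simp add: c_def flip: of_nat_sum)
  have cle: "c a \<le> n" for a
  proof -
    have "c a \<le> (\<Sum>a\<in>UNIV. c a)" by (rule member_le_sum) auto
    then show ?thesis using sum_count_list[of xs0] assms by (simp add: c_def)
  qed
  have lo: "(\<Sum>a\<in>UNIV. real (c a) * ln (real (c a)) - real (c a)) \<le> (\<Sum>a\<in>UNIV. ln (fact (c a)))"
    by (intro sum_mono) (use ln_fact_bounds in blast)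
  have hi1: "(\<Sum>a\<in>UNIV. ln (fact (c a))) \<le> (\<Sum>a\<in>UNIV. real (c a) * ln (real (c a)) - real (c a) + (1 + ln (real n + 1)))"
  proof (intro sum_mono)
    fix a
    have "ln (real (c a) + 1) \<le> ln (real n + 1)" using cle[of a] by simp
    then show "ln (fact (c a)) \<le> real (c a) * ln (real (c a)) - real (c a) + (1 + ln (real n + 1))"
      using ln_fact_bounds[of "c a"] by linarith
  qed
  have hi: "(\<Sum>a\<in>UNIV. ln (fact (c a))) \<le> (\<Sum>a\<in>UNIV. real (c a) * ln (real (c a))) - real n + real CARD('a) * (1 + ln (real n + 1))"
    using hi1 sc by (simp add: sum.distrib sum_subtractf)
  have lo2: "(\<Sum>a\<in>UNIV. real (c a) * ln (real (c a))) - real n \<le> (\<Sum>a\<in>UNIV. ln (fact (c a)))"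
    using lo sc by (simp add: sum_subtractf)
  have lc: "ln (real (card (typeclass_set n (ltype xs0)))) = ln (fact n) - (\<Sum>a\<in>UNIV. ln (fact (c a)))"
    using ln_card_typeclass[OF assms] by (simp add: c_def)
  have ne: "real n * ent (ltype xs0) = real n * ln (real n) - (\<Sum>a\<in>UNIV. real (c a) * ln (real (c a)))"
    using n_ent_ltype[OF assms] by (simp add: c_def)
  have ln1: "0 \<le> ln (real n + 1)" by simp
  show ?thesis using lc ne lo2 hi ln_fact_bounds[of n] ln1 unfolding errb_def
    by (auto simp: abs_le_iff algebra_simps)
qed



lemma ltype_mset: "mset a = mset b \<Longrightarrow> ltype a = ltype b"
  by (auto simp: ltype_def fun_eq_iff count_mset[symmetric] dest: mset_eq_length)

lemma finite_typeclass: "finite (typeclass_set n (Q :: 'a::finite \<Rightarrow> real))"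
proof -
  have "typeclass_set n Q \<subseteq> {xs. set xs \<subseteq> UNIV \<and> length xs = n}" by (auto simp: typeclass_set_def)
  moreover have "finite {xs::'a list. set xs \<subseteq> UNIV \<and> length xs = n}"
    by (rule finite_lists_length_eq) simp
  ultimately show ?thesis by (rule finite_subset)
qed

definition fiber :: "nat \<Rightarrow> ('x \<Rightarrow> real) \<Rightarrow> ('x \<times> 'y \<Rightarrow> real) \<Rightarrow> 'y list \<Rightarrow> 'x list set" where
  "fiber n P J ys = {xs. xs \<in> typeclass_set n P \<and> jtype xs ys = J}"

lemma fiber_le:
  fixes ys ys' :: "'y::finite list"
  assumes "mset ys = mset ys'" "length ys = n"
  shows "card (fiber n P J ys) \<le> card (fiber n (P :: 'x::finite \<Rightarrow> real) J ys')"
proof -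
  obtain p where p: "p permutes {..<length ys}" "permute_list p ys = ys'"
    by (rule mset_eq_permutation[OF sym[OF assms(1)]])
  have inj: "inj_on (permute_list p) (fiber n P J ys)"
  proof (rule inj_onI)
    fix a b assume a: "a \<in> fiber n P J ys" and b: "b \<in> fiber n P J ys" and e: "permute_list p a = permute_list p b"
    have la: "length a = n" and lb: "length b = n" using a b by (auto simp: fiber_def typeclass_set_def)
    show "a = b"
    proof (rule nth_equalityI)
      show "length a = length b" using la lb by simp
      fix i assume i: "i < length a"
      have pi: "p permutes {..<length a}" using p(1) la assms(2) by simp
      have pb: "p permutes {..<length b}" using p(1) lb assms(2) by simp
      have "i \<in> p ` {..<length a}" using permutes_image[OF pi] i by simp
      then obtain j where j: "j < length a" "p j = i" by auto
      have "permute_list p a ! j = permute_list p b ! j" using e by simp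
      then show "a ! i = b ! i" using permute_list_nth[OF pi j(1)] permute_list_nth[OF pb] j la lb by simp
    qed
  qed
  have img: "permute_list p ` fiber n P J ys \<subseteq> fiber n P J ys'"
  proof
    fix z assume "z \<in> permute_list p ` fiber n P J ys"
    then obtain a where a: "a \<in> fiber n P J ys" and z: "z = permute_list p a" by blast
    have la: "length a = n" using a by (auto simp: fiber_def typeclass_set_def)
    have pa: "p permutes {..<length a}" using p(1) la assms(2) by simp
    have "ltype z = ltype a" unfolding z by (rule ltype_mset) (simp add: pa)
    moreover have "jtype z ys' = jtype a ys"
    proof -
      have "permute_list p (zip a ys) = zip (permute_list p a) (permute_list p ys)"
        by (rule permute_list_zip[OF pa refl]) (use la assms(2) in simp)
      then have "zip z ys' = permute_list p (zip a ys)"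
        unfolding z p(2)[symmetric] by simp
      moreover have "p permutes {..<length (zip a ys)}" using pa la assms(2) by simp
      ultimately show ?thesis unfolding jtype_def by (intro ltype_mset) simp
    qed
    ultimately show "z \<in> fiber n P J ys'" using a la by (auto simp: z fiber_def typeclass_set_def)
  qed
  have fin: "finite (fiber n P J ys')"
    by (rule finite_subset[OF _ finite_typeclass[of n P]]) (auto simp: fiber_def)
  show ?thesis using card_inj_on_le[OF inj img fin] .
qed

lemma fiber_eq:
  fixes ys ys' :: "'y::finite list"
  assumes "ys \<in> typeclass_set n Q" "ys' \<in> typeclass_set n Q" "n > 0"
  shows "card (fiber n P J ys) = card (fiber n (P :: 'x::finite \<Rightarrow> real) J ys')"
proof -
  have l: "length ys = n" "length ys' = n" "ltype ys = ltype ys'" using assms by (auto simp: typeclass_set_def)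
  then have "mset ys = mset ys'" using ltype_eq_iff[of ys ys'] assms(3) by simp
  then show ?thesis using fiber_le[of ys ys' n P J] fiber_le[of ys' ys n P J] l by simp
qed

lemma card_joint:
  fixes xs0 :: "'x::finite list" and ys0 :: "'y::finite list"
  assumes "length xs0 = n" "length ys0 = n" "n > 0" "ys \<in> typeclass_set n (ltype ys0)"
  shows "card (typeclass_set n (jtype xs0 ys0)) = card (typeclass_set n (ltype ys0)) * card (fiber n (ltype xs0) (jtype xs0 ys0) ys)"
proof -
  define J where "J = jtype xs0 ys0"
  define S where "S = (SIGMA ys':typeclass_set n (ltype ys0). fiber n (ltype xs0) J ys')"
  have bij: "bij_betw (\<lambda>(ys', xs). zip xs ys') S (typeclass_set n J)"
  proof (rule bij_betwI')
    fix u v assume uv: "u \<in> S" "v \<in> S"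
    obtain a1 b1 where u: "u = (a1, b1)" by (cases u)
    obtain a2 b2 where v: "v = (a2, b2)" by (cases v)
    have l: "length a1 = n" "length b1 = n" "length a2 = n" "length b2 = n"
      using uv unfolding u v S_def fiber_def typeclass_set_def by auto
    show "((case u of (ys', xs) \<Rightarrow> zip xs ys') = (case v of (ys', xs) \<Rightarrow> zip xs ys')) = (u = v)"
    proof
      assume "(case u of (ys', xs) \<Rightarrow> zip xs ys') = (case v of (ys', xs) \<Rightarrow> zip xs ys')"
      then have e: "zip b1 a1 = zip b2 a2" by (simp add: u v)
      have "map fst (zip b1 a1) = map fst (zip b2 a2)" "map snd (zip b1 a1) = map snd (zip b2 a2)"
        using e by simp_all
      then show "u = v" using l by (simp add: u v)
    qed simp
  next
    fix u assume "u \<in> S"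
    then show "(case u of (ys', xs) \<Rightarrow> zip xs ys') \<in> typeclass_set n J"
      by (cases u) (auto simp: S_def fiber_def typeclass_set_def jtype_def)
  next
    fix z assume z: "z \<in> typeclass_set n J"
    define a where "a = map fst z"
    define b where "b = map snd z"
    have zz: "z = zip a b" by (simp add: a_def b_def zip_map_fst_snd)
    have lab: "length a = n" "length b = n" using z by (auto simp: a_def b_def typeclass_set_def)
    have jab: "jtype a b = J" using z zz by (simp add: typeclass_set_def jtype_def)
    have "ltype b = ltype ys0"
      using margY_jtype[of a b] margY_jtype[of xs0 ys0] lab assms jab by (simp add: J_def)
    moreover have "ltype a = ltype xs0"
    proof
      fix x
      show "ltype a x = ltype xs0 x"
        using margX_jtype[of a b x] margX_jtype[of xs0 ys0 x] lab assms jab by (simp add: J_def)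
    qed
    ultimately have "(b, a) \<in> S" using lab jab by (auto simp: S_def fiber_def typeclass_set_def)
    then show "\<exists>u\<in>S. z = (case u of (ys', xs) \<Rightarrow> zip xs ys')" using zz by force
  qed
  have "card (typeclass_set n J) = card S" using bij_betw_same_card[OF bij] by simp
  also have "\<dots> = (\<Sum>ys'\<in>typeclass_set n (ltype ys0). card (fiber n (ltype xs0) J ys'))"
    unfolding S_def
    by (rule card_SigmaI) (auto intro: finite_typeclass finite_subset[OF _ finite_typeclass[of n "ltype xs0"]] simp: fiber_def)
  also have "\<dots> = (\<Sum>ys'\<in>typeclass_set n (ltype ys0). card (fiber n (ltype xs0) J ys))"
    by (intro sum.cong refl fiber_eq[OF _ assms(4) assms(3)])
  also have "\<dots> = card (typeclass_set n (ltype ys0)) * card (fiber n (ltype xs0) J ys)" by simp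
  finally show ?thesis by (simp add: J_def)
qed

lemma breve_p_eq:
  fixes xs0 :: "'x::finite list" and ys0 :: "'y::finite list"
  assumes "length xs0 = n" "length ys0 = n" "n > 0"
  shows "breve_p n (ltype xs0) (jtype xs0 ys0) =
    real (card (typeclass_set n (jtype xs0 ys0))) / (real (card (typeclass_set n (ltype ys0))) * real (card (typeclass_set n (ltype xs0))))"
proof -
  define ys where "ys = (SOME ys. ys \<in> typeclass_set n (margY (jtype xs0 ys0)))"
  have my: "margY (jtype xs0 ys0) = ltype ys0" using margY_jtype[of xs0 ys0] assms by simp
  have ys0: "ys0 \<in> typeclass_set n (ltype ys0)" using assms by (simp add: typeclass_set_def)
  have ys: "ys \<in> typeclass_set n (ltype ys0)" unfolding ys_def my using ys0 by (rule someI)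
  have cpos: "card (typeclass_set n (ltype ys0)) > 0"
    using ys0 finite_typeclass card_gt_0_iff by blast
  have "breve_p n (ltype xs0) (jtype xs0 ys0) = real (card (fiber n (ltype xs0) (jtype xs0 ys0) ys)) / real (card (typeclass_set n (ltype xs0)))"
    unfolding breve_p_def Let_def ys_def[symmetric] fiber_def by simp
  also have "\<dots> = real (card (typeclass_set n (jtype xs0 ys0))) / (real (card (typeclass_set n (ltype ys0))) * real (card (typeclass_set n (ltype xs0))))"
    using card_joint[OF assms ys] cpos by simp
  finally show ?thesis .
qed



lemma sum_pairs: "(\<Sum>a\<in>(UNIV::('x::finite \<times> 'y::finite) set). f a) = (\<Sum>x\<in>UNIV. \<Sum>y\<in>UNIV. f (x,y))"
  unfolding UNIV_Times_UNIV[symmetric] sum.cartesian_product by (simp add: case_prod_beta)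

lemma sum_pairs': "(\<Sum>a\<in>(UNIV::('x::finite \<times> 'y::finite) set). f a) = (\<Sum>y\<in>UNIV. \<Sum>x\<in>UNIV. f (x,y))"
  unfolding sum_pairs by (rule sum.swap)

lemma alg:
  fixes tY tJ tP NY NJ NP NS NR eY eJ eP l2 :: real
  assumes "\<bar>tY - NY\<bar> \<le> eY" "\<bar>tJ - NJ\<bar> \<le> eJ" "\<bar>tP - NP\<bar> \<le> eP" "0 \<le> l2" "l2 \<le> 1"
  shows "\<bar>(-l2 + tY + NS + min (l2 + (tJ - tY - tP)) (-NR/2 + (tJ - tY - tP)/2))
          + ((NP - NJ - NS) + 1/2 * max 0 (NR - (NP + NY - NJ)))\<bar> \<le> 2 + 2*eY + eJ + eP"
  using assms unfolding min_def max_def abs_le_iff by (auto split: if_splits; argo)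

lemma n_G:
  fixes n EY EJ EP S R :: real
  assumes "n \<ge> 0"
  shows "n * ((EP - EJ - S) + 1/2 * max 0 (R - (EP + EY - EJ))) =
     ((n*EP - n*EJ - n*S) + 1/2 * max 0 (n*R - (n*EP + n*EY - n*EJ)))"
proof -
  have m0: "n * max 0 t = max 0 (n*t)" for t
    using assms by (cases "t \<ge> 0") (auto simp: max_def mult_le_0_iff zero_le_mult_iff)
  have e1: "n * ((EP - EJ - S) + 1/2 * max 0 (R - (EP + EY - EJ))) = (n*EP - n*EJ - n*S) + 1/2 * (n * max 0 (R - (EP + EY - EJ)))"
    by (simp only: distrib_left right_diff_distrib mult.left_commute)
  have e2: "n * (R - (EP + EY - EJ)) = n*R - (n*EP + n*EY - n*EJ)"
    by (simp only: distrib_left right_diff_distrib)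
  show ?thesis unfolding e1 m0 e2 ..
qed

definition good :: "('x \<Rightarrow> 'y \<Rightarrow> real) \<Rightarrow> ('x \<times> 'y \<Rightarrow> real) \<Rightarrow> bool" where
  "good W J \<longleftrightarrow> (\<forall>x y. J (x, y) > 0 \<longrightarrow> W x y > 0)"

definition SW :: "('x::finite \<Rightarrow> 'y::finite \<Rightarrow> real) \<Rightarrow> ('x \<times> 'y \<Rightarrow> real) \<Rightarrow> real" where
  "SW W J = (\<Sum>(x,y)\<in>UNIV. J (x, y) * ln (W x y))"

definition Gf :: "('x::finite \<Rightarrow> 'y::finite \<Rightarrow> real) \<Rightarrow> real \<Rightarrow> ('x \<Rightarrow> real) \<Rightarrow> ('x \<times> 'y \<Rightarrow> real) \<Rightarrow> real" where
  "Gf W R P J = (ent P - ent J - SW W J) + 1/2 * max 0 (R - (ent P + ent (margY J) - ent J))"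

lemma chan_exp_good:
  fixes W :: "'x::finite \<Rightarrow> 'y::finite \<Rightarrow> real"
  assumes "good W J" "\<forall>a. J a \<ge> 0"
  shows "chan_exp n W J = exp (real n * SW W J)"
proof -
  have "chan_exp n W J = (\<Prod>a\<in>UNIV. exp (real n * (J a * ln (W (fst a) (snd a)))))"
    unfolding chan_exp_def
  proof (intro prod.cong refl)
    fix a :: "'x \<times> 'y"
    obtain x y where a: "a = (x, y)" by (cases a)
    show "(case a of (x, y) \<Rightarrow> if J (x, y) = 0 then 1 else W x y powr (real n * J (x, y))) =
          exp (real n * (J a * ln (W (fst a) (snd a))))"
    proof (cases "J (x, y) = 0")
      case True then show ?thesis by (simp add: a)
    next
      case False
      then have "J (x,y) > 0" using assms(2) by (metis less_eq_real_def)
      then have "W x y > 0" using assms(1) by (simp add: good_def)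
      then show ?thesis using False by (simp add: a powr_def algebra_simps)
    qed
  qed
  also have "\<dots> = exp (\<Sum>a\<in>UNIV. real n * (J a * ln (W (fst a) (snd a))))"
    by (simp add: exp_sum)
  also have "\<dots> = exp (real n * SW W J)"
    by (simp add: SW_def sum_distrib_left case_prod_beta)
  finally show ?thesis .
qed

lemma chan_exp_bad:
  fixes W :: "'x::finite \<Rightarrow> 'y::finite \<Rightarrow> real"
  assumes "n > 0" "J (x, y) > 0" "W x y = 0"
  shows "chan_exp n W J = 0"
  unfolding chan_exp_def
  by (rule prod_zero) (use assms in \<open>auto intro!: exI[of _ x] exI[of _ y]\<close>)

lemma rel_ent_PW:
  fixes W :: "'x::finite \<Rightarrow> 'y::finite \<Rightarrow> real" and P :: "'x \<Rightarrow> real"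
  assumes g: "good W J" and nn: "\<forall>a. J a \<ge> 0" and mx: "\<forall>x. (\<Sum>y\<in>UNIV. J (x, y)) = P x"
  shows "rel_ent J (\<lambda>(x, y). P x * W x y) = ereal (ent P - ent J - SW W J)"
proof -
  have Ppos: "P x > 0" if "J (x, y) > 0" for x y
  proof -
    have "J (x, y) \<le> (\<Sum>y\<in>UNIV. J (x, y))" by (rule member_le_sum) (use nn in auto)
    then show ?thesis using mx that by simp
  qed
  have nb: "\<not> (\<exists>a. J a > 0 \<and> (\<lambda>(x, y). P x * W x y) a = 0)"
  proof
    assume "\<exists>a. J a > 0 \<and> (\<lambda>(x, y). P x * W x y) a = 0"
    then obtain x y where "J (x,y) > 0" "P x * W x y = 0" by auto
    moreover have "P x > 0" "W x y > 0" using Ppos[of x y] g \<open>J (x,y) > 0\<close> by (auto simp: good_def)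
    ultimately show False by simp
  qed
  have "(\<Sum>a\<in>UNIV. if J a = 0 then 0 else J a * ln (J a / (\<lambda>(x, y). P x * W x y) a))
       = (\<Sum>a\<in>UNIV. J a * ln (J a) - J a * ln (P (fst a)) - J a * ln (W (fst a) (snd a)))"
  proof (intro sum.cong refl)
    fix a :: "'x \<times> 'y"
    obtain x y where a: "a = (x, y)" by (cases a)
    show "(if J a = 0 then 0 else J a * ln (J a / (\<lambda>(x, y). P x * W x y) a)) =
          J a * ln (J a) - J a * ln (P (fst a)) - J a * ln (W (fst a) (snd a))"
    proof (cases "J (x, y) = 0")
      case True then show ?thesis by (simp add: a)
    next
      case False
      then have "J (x,y) > 0" using nn by (metis less_eq_real_def)
      then have "W x y > 0" "P x > 0" using g Ppos by (auto simp: good_def)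
      then show ?thesis using False \<open>J (x,y) > 0\<close> by (simp add: a ln_div ln_mult algebra_simps)
    qed
  qed
  also have "\<dots> = (\<Sum>a\<in>UNIV. J a * ln (J a)) - (\<Sum>a\<in>UNIV. J a * ln (P (fst a))) - SW W J"
    by (simp add: sum_subtractf SW_def case_prod_beta)
  also have "(\<Sum>a\<in>UNIV. J a * ln (P (fst a))) = (\<Sum>x\<in>UNIV. P x * ln (P x))"
    by (simp add: sum_pairs sum_distrib_right[symmetric] mx)
  finally show ?thesis using nb by (simp add: rel_ent_def ent_def)
qed

lemma rel_ent_PQ:
  fixes P :: "'x::finite \<Rightarrow> real" and J :: "'x \<times> 'y::finite \<Rightarrow> real"
  assumes nn: "\<forall>a. J a \<ge> 0" and mx: "\<forall>x. (\<Sum>y\<in>UNIV. J (x, y)) = P x"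
  shows "rel_ent J (\<lambda>(x, y). P x * margY J y) = ereal (ent P + ent (margY J) - ent J)"
proof -
  have Ppos: "P x > 0" if "J (x, y) > 0" for x y
  proof -
    have "J (x, y) \<le> (\<Sum>y\<in>UNIV. J (x, y))" by (rule member_le_sum) (use nn in auto)
    then show ?thesis using mx that by simp
  qed
  have Qpos: "margY J y > 0" if "J (x, y) > 0" for x y
  proof -
    have "J (x, y) \<le> (\<Sum>x\<in>UNIV. J (x, y))" by (rule member_le_sum) (use nn in auto)
    then show ?thesis using that by (simp add: margY_def)
  qed
  have nb: "\<not> (\<exists>a. J a > 0 \<and> (\<lambda>(x, y). P x * margY J y) a = 0)"
    using Ppos Qpos by fastforce
  have "(\<Sum>a\<in>UNIV. if J a = 0 then 0 else J a * ln (J a / (\<lambda>(x, y). P x * margY J y) a))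
       = (\<Sum>a\<in>UNIV. J a * ln (J a) - J a * ln (P (fst a)) - J a * ln (margY J (snd a)))"
  proof (intro sum.cong refl)
    fix a :: "'x \<times> 'y"
    obtain x y where a: "a = (x, y)" by (cases a)
    show "(if J a = 0 then 0 else J a * ln (J a / (\<lambda>(x, y). P x * margY J y) a)) =
          J a * ln (J a) - J a * ln (P (fst a)) - J a * ln (margY J (snd a))"
    proof (cases "J (x, y) = 0")
      case True then show ?thesis by (simp add: a)
    next
      case False
      then have "J (x,y) > 0" using nn by (metis less_eq_real_def)
      then have "margY J y > 0" "P x > 0" using Qpos Ppos by auto
      then show ?thesis using False \<open>J (x,y) > 0\<close> by (simp add: a ln_div ln_mult algebra_simps)
    qed
  qed
  also have "\<dots> = (\<Sum>a\<in>UNIV. J a * ln (J a)) - (\<Sum>a\<in>UNIV. J a * ln (P (fst a))) - (\<Sum>a\<in>UNIV. J a * ln (margY J (snd a)))"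
    by (simp add: sum_subtractf)
  also have "(\<Sum>a\<in>UNIV. J a * ln (P (fst a))) = (\<Sum>x\<in>UNIV. P x * ln (P x))"
    by (simp add: sum_pairs sum_distrib_right[symmetric] mx)
  also have "(\<Sum>a\<in>UNIV. J a * ln (margY J (snd a))) = (\<Sum>y\<in>UNIV. margY J y * ln (margY J y))"
    by (simp add: sum_pairs' sum_distrib_right[symmetric] margY_def)
  finally show ?thesis using nb by (simp add: rel_ent_def ent_def)
qed



definition Cb :: "nat \<Rightarrow> nat \<Rightarrow> nat \<Rightarrow> nat \<Rightarrow> real" where
  "Cb cx cy cxy n = 2 + 2 * errb cy n + errb cxy n + errb cx n"

lemma exp_min: "min (exp a) (exp b) = exp (min a b :: real)"
  by (simp add: min_def)

lemma main_bound:
  fixes W :: "'x::finite \<Rightarrow> 'y::finite \<Rightarrow> real" and xs0 :: "'x list" and ys0 :: "'y list"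
  assumes l: "length xs0 = n" "length ys0 = n" and n: "n > 0" and g: "good W (jtype xs0 ys0)"
  shows "lhs_term W R n (ltype xs0) (jtype xs0 ys0) > 0 \<and>
    \<bar>ln (lhs_term W R n (ltype xs0) (jtype xs0 ys0)) + real n * Gf W R (ltype xs0) (jtype xs0 ys0)\<bar>
      \<le> Cb CARD('x) CARD('y) CARD('x \<times> 'y) n"
proof -
  define J where "J = jtype xs0 ys0"
  define P where "P = ltype xs0"
  define cY where "cY = real (card (typeclass_set n (ltype ys0)))"
  define cJ where "cJ = real (card (typeclass_set n J))"
  define cP where "cP = real (card (typeclass_set n P))"
  have my: "margY J = ltype ys0" unfolding J_def using margY_jtype[of xs0 ys0] l by simp
  have lz: "length (zip xs0 ys0) = n" using l by simp
  have Jz: "J = ltype (zip xs0 ys0)" by (simp add: J_def jtype_def)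
  have cpos: "card (typeclass_set n Q) > 0" if "Q = ltype zs" "length zs = n" for Q and zs :: "'z::finite list"
  proof -
    have "zs \<in> typeclass_set n Q" using that by (simp add: typeclass_set_def)
    then show ?thesis using finite_typeclass card_gt_0_iff by blast
  qed
  have cY: "cY > 0" unfolding cY_def using cpos[of _ ys0] l by simp
  have cJ: "cJ > 0" unfolding cJ_def using cpos[OF Jz lz] by simp
  have cP: "cP > 0" unfolding cP_def using cpos[of _ xs0] l by (simp add: P_def)
  have bY: "\<bar>ln cY - real n * ent (margY J)\<bar> \<le> errb CARD('y) n"
    unfolding cY_def my using ln_card_tc[OF l(2) n] .
  have bJ: "\<bar>ln cJ - real n * ent J\<bar> \<le> errb CARD('x \<times> 'y) n"
    unfolding cJ_def Jz using ln_card_tc[OF lz n] .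
  have bP: "\<bar>ln cP - real n * ent P\<bar> \<le> errb CARD('x) n"
    unfolding cP_def P_def using ln_card_tc[OF l(1) n] .
  define p where "p = breve_p n P J"
  have p: "p = cJ / (cY * cP)"
    unfolding p_def P_def J_def cJ_def cY_def cP_def using breve_p_eq[OF l n] by simp
  have ppos: "p > 0" using p cJ cY cP by simp
  have lp: "ln p = ln cJ - ln cY - ln cP" using p cJ cY cP by (simp add: ln_div ln_mult)
  have nn: "\<forall>a. J a \<ge> 0" by (simp add: J_def jtype_def ltype_def)
  have ce: "chan_exp n W J = exp (real n * SW W J)" using chan_exp_good[OF g[folded J_def] nn] .
  have s1: "2 * p = exp (ln 2 + ln p)" using ppos by (simp add: exp_add)
  have s2: "exp (real n * R) powr (-1/2) * sqrt p = exp (-(real n * R)/2 + ln p / 2)"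
    using ppos by (simp add: powr_def powr_half_sqrt[symmetric] mult_exp_exp add.commute)
  have bY': "breve_Y (exp (real n * R)) n P J = exp (min (ln 2 + ln p) (-(real n * R)/2 + ln p / 2))"
    unfolding breve_Y_def p_def[symmetric] s1 s2 exp_min ..
  have half: "(1/2::real) = exp (- ln 2)" by (simp add: exp_minus)
  have L: "lhs_term W R n P J = exp (- ln 2 + ln cY + real n * SW W J + min (ln 2 + ln p) (-(real n * R)/2 + ln p / 2))"
    unfolding lhs_term_def bY' ce my cY_def[symmetric] half using cY by (simp add: exp_add exp_diff exp_minus field_simps)
  have Lpos: "lhs_term W R n P J > 0" unfolding L by simp
  have lnL: "ln (lhs_term W R n P J) = - ln 2 + ln cY + real n * SW W J + min (ln 2 + (ln cJ - ln cY - ln cP)) (-(real n * R)/2 + (ln cJ - ln cY - ln cP) / 2)"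
    unfolding L lp by simp
  have nG: "real n * Gf W R P J = (real n * ent P - real n * ent J - real n * SW W J) + 1/2 * max 0 (real n * R - (real n * ent P + real n * ent (margY J) - real n * ent J))"
    unfolding Gf_def by (rule n_G) simp
  have l2: "0 \<le> ln (2::real)" "ln (2::real) \<le> 1" using ln_2_less_1 by auto
  have "\<bar>ln (lhs_term W R n P J) + real n * Gf W R P J\<bar> \<le> 2 + 2 * errb CARD('y) n + errb CARD('x \<times> 'y) n + errb CARD('x) n"
    unfolding lnL nG by (rule alg[OF bY bJ bP l2])
  then show ?thesis using Lpos unfolding Cb_def P_def J_def by simp
qed

lemma lhs_bad:
  fixes W :: "'x::finite \<Rightarrow> 'y::finite \<Rightarrow> real"
  assumes "n > 0" "\<not> good W J"  "\<forall>x y. W x y \<ge> 0"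
  shows "lhs_term W R n P J = 0"
proof -
  obtain x y where "J (x,y) > 0" "\<not> W x y > 0" using assms(2) by (auto simp: good_def)
  then have "W x y = 0" using assms(3) by (metis less_eq_real_def)
  then have "chan_exp n W J = 0" using chan_exp_bad[of n J x y W, OF assms(1) \<open>J (x,y) > 0\<close>] by simp
  then show ?thesis by (simp add: lhs_term_def)
qed

lemma rel_ent_bad:
  fixes W :: "'x::finite \<Rightarrow> 'y::finite \<Rightarrow> real"
  assumes "\<not> good W J"  "\<forall>x y. W x y \<ge> 0"
  shows "rel_ent J (\<lambda>(x, y). P x * W x y) = \<infinity>"
proof -
  obtain x y where "J (x,y) > 0" "\<not> W x y > 0" using assms(1) by (auto simp: good_def)
  then have "W x y = 0" using assms(2) by (metis less_eq_real_def)
  then show ?thesis using \<open>J (x,y) > 0\<close> unfolding rel_ent_def by (auto intro!: exI[of _ "(x,y)"])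
qed



lemma isCont_xlnx: "isCont (\<lambda>t::real. t * ln t) a"
proof (cases "a = 0")
  case False
  then show ?thesis by (intro continuous_intros isCont_ln)
next
  case True
  have r: "((\<lambda>t::real. t * ln t) \<longlongrightarrow> 0) (at_right 0)" by real_asymp
  have r2: "((\<lambda>t::real. - (t * ln t)) \<longlongrightarrow> 0) (at_right 0)" by real_asymp
  have l: "((\<lambda>t::real. t * ln t) \<longlongrightarrow> 0) (at_left 0)"
    unfolding filterlim_at_left_to_right using r2 by (simp add: ln_minus)
  have "((\<lambda>t::real. t * ln t) \<longlongrightarrow> 0) (at 0)" by (rule filterlim_split_at[OF l r])
  then show ?thesis using True by (simp add: isCont_def)
qed

lemma ent_tendsto:
  fixes f :: "'b \<Rightarrow> 'a::finite \<Rightarrow> real"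
  assumes "\<And>a. ((\<lambda>k. f k a) \<longlongrightarrow> g a) F"
  shows "((\<lambda>k. ent (f k)) \<longlongrightarrow> ent g) F"
  unfolding ent_def
  by (intro tendsto_minus tendsto_sum isCont_tendsto_compose[OF isCont_xlnx, of "\<lambda>k. f k _"] assms)

lemma margY_tendsto:
  fixes f :: "'b \<Rightarrow> ('x::finite \<times> 'y::finite) \<Rightarrow> real"
  assumes "\<And>a. ((\<lambda>k. f k a) \<longlongrightarrow> g a) F"
  shows "((\<lambda>k. margY (f k) y) \<longlongrightarrow> margY g y) F"
  unfolding margY_def by (intro tendsto_sum assms)

lemma Gf_tendsto:
  fixes f :: "'b \<Rightarrow> ('x::finite \<times> 'y::finite) \<Rightarrow> real"
  assumes "\<And>a. ((\<lambda>k. f k a) \<longlongrightarrow> g a) F"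
  shows "((\<lambda>k. Gf W R P (f k)) \<longlongrightarrow> Gf W R P g) F"
proof -
  have e: "((\<lambda>k. ent (f k)) \<longlongrightarrow> ent g) F" by (rule ent_tendsto[OF assms])
  have ey: "((\<lambda>k. ent (margY (f k))) \<longlongrightarrow> ent (margY g)) F"
    by (rule ent_tendsto[OF margY_tendsto[OF assms]])
  have sw: "((\<lambda>k. SW W (f k)) \<longlongrightarrow> SW W g) F"
    unfolding SW_def case_prod_beta by (intro tendsto_sum tendsto_mult assms tendsto_const)
  show ?thesis unfolding Gf_def
    by (intro tendsto_add tendsto_diff tendsto_mult tendsto_max e ey sw tendsto_const)
qed

definition rep :: "nat \<Rightarrow> 'a list \<Rightarrow> 'a list" where
  "rep q xs = concat (replicate q xs)"

lemma rep_length [simp]: "length (rep q xs) = q * length xs"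
  by (induction q) (auto simp: rep_def)

lemma rep_count [simp]: "count_list (rep q xs) a = q * count_list xs a"
  by (induction q) (auto simp: rep_def)

lemma rep_zip: "length xs = length ys \<Longrightarrow> zip (rep q xs) (rep q ys) = rep q (zip xs ys)"
  by (induction q) (auto simp: rep_def)

lemma concat_pair:
  fixes a0 a1 :: "'x::finite list" and b0 b1 :: "'y::finite list"
  assumes la0: "length a0 = m * k0" and lb0: "length b0 = m * k0" and ta0: "ltype a0 = P"
    and la1: "length a1 = m" and lb1: "length b1 = m" and ta1: "ltype a1 = P"
    and g0: "good W (jtype a0 b0)" and g1: "good W (jtype a1 b1)"
    and m: "m > 0" and k0: "k0 > 0" and qr: "q * k0 + r > 0"
  shows "jtype (rep q a0 @ rep r a1) (rep q b0 @ rep r b1) \<in> cond_types (m * (q * k0 + r)) P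
    \<and> good W (jtype (rep q a0 @ rep r a1) (rep q b0 @ rep r b1))
    \<and> (\<forall>z. jtype (rep q a0 @ rep r a1) (rep q b0 @ rep r b1) z
          = (real (q * k0) * jtype a0 b0 z + real r * jtype a1 b1 z) / real (q * k0 + r))"
proof -
  define XS where "XS = rep q a0 @ rep r a1"
  define YS where "YS = rep q b0 @ rep r b1"
  define n where "n = m * (q * k0 + r)"
  have n: "n > 0" using m qr by (simp add: n_def)
  have lX: "length XS = n" using la0 la1 by (simp add: XS_def n_def algebra_simps)
  have lY: "length YS = n" using lb0 lb1 by (simp add: YS_def n_def algebra_simps)
  have zz: "zip XS YS = rep q (zip a0 b0) @ rep r (zip a1 b1)"
    unfolding XS_def YS_def using la0 lb0 la1 lb1 by (simp add: rep_zip)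
  have c0: "real (count_list a0 x) = real (m * k0) * P x" for x
    using ta0 la0 m k0 by (auto simp: ltype_def fun_eq_iff field_simps)
  have c1: "real (count_list a1 x) = real m * P x" for x
    using ta1 la1 m by (auto simp: ltype_def fun_eq_iff field_simps)
  have tX: "ltype XS = P"
  proof
    fix x
    have "ltype XS x = (real q * real (count_list a0 x) + real r * real (count_list a1 x)) / real n"
      using lX by (simp add: XS_def ltype_def)
    also have "\<dots> = P x"
    proof -
      have "real q * real (count_list a0 x) + real r * real (count_list a1 x) = P x * real n"
        unfolding c0 c1 n_def by (simp add: algebra_simps)
      then show ?thesis using n by simp
    qed
    finally show "ltype XS x = P x" .
  qed
  have mem: "jtype XS YS \<in> cond_types n P"
    unfolding cond_types_def typeclass_set_def using tX lX lY by blast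
  have val: "jtype XS YS z = (real (q * k0) * jtype a0 b0 z + real r * jtype a1 b1 z) / real (q * k0 + r)" for z
  proof -
    have j1: "jtype XS YS z = real (count_list (zip XS YS) z) / real n" using lX lY by (simp add: jtype_def ltype_def)
    have j2: "count_list (zip XS YS) z = q * count_list (zip a0 b0) z + r * count_list (zip a1 b1) z" by (simp add: zz)
    have "jtype XS YS z = (real q * real (count_list (zip a0 b0) z) + real r * real (count_list (zip a1 b1) z)) / real n"
      unfolding j1 j2 by simp
    also have "\<dots> = (real (q * k0) * jtype a0 b0 z + real r * jtype a1 b1 z) / real (q * k0 + r)"
      using la0 lb0 la1 lb1 m k0 by (simp add: jtype_def ltype_def n_def field_simps)
    finally show ?thesis .
  qed
  have gd: "good W (jtype XS YS)"
    unfolding good_def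
  proof (intro allI impI)
    fix x y assume "jtype XS YS (x, y) > 0"
    then have "count_list (zip XS YS) (x,y) > 0" by (simp add: jtype_def ltype_def zero_less_divide_iff)
    then have "count_list (zip a0 b0) (x,y) > 0 \<or> count_list (zip a1 b1) (x,y) > 0"
      unfolding zz by auto
    then have "jtype a0 b0 (x,y) > 0 \<or> jtype a1 b1 (x,y) > 0"
      using la0 lb0 la1 lb1 m k0 by (auto simp: jtype_def ltype_def)
    then show "W x y > 0" using g0 g1 by (auto simp: good_def)
  qed
  show ?thesis using mem gd val by (simp add: XS_def YS_def n_def)
qed



lemma zip_map_same: "(x, y) \<in> set (zip xs (map g xs)) \<Longrightarrow> y = g x"
  by (induction xs) auto

lemma finite_cond_types: "finite (cond_types n (P :: 'x::finite \<Rightarrow> real) :: ('x \<times> 'y::finite \<Rightarrow> real) set)"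
proof -
  have "cond_types n P = (\<lambda>(xs, ys). jtype xs ys) ` (typeclass_set n P \<times> {ys::'y list. set ys \<subseteq> UNIV \<and> length ys = n})"
    unfolding cond_types_def by auto
  moreover have "finite (typeclass_set n P \<times> {ys::'y list. set ys \<subseteq> UNIV \<and> length ys = n})"
    by (intro finite_cartesian_product finite_typeclass finite_lists_length_eq) simp
  ultimately show ?thesis by simp
qed

lemma cond_types_E:
  assumes "J \<in> cond_types n P"
  obtains xs ys where "length xs = n" "length ys = n" "ltype xs = P" "J = jtype xs ys"
  using assms unfolding cond_types_def typeclass_set_def by blast

definition Fv :: "('x::finite \<Rightarrow> 'y::finite \<Rightarrow> real) \<Rightarrow> real \<Rightarrow> ('x \<Rightarrow> real) \<Rightarrow> ('x \<times> 'y \<Rightarrow> real) \<Rightarrow> ereal" where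
  "Fv W R P J = rel_ent J (\<lambda>(x, y). P x * W x y)
            + ereal (1/2) * max 0 (ereal R - rel_ent J (\<lambda>(x, y). P x * margY J y))"

lemma Fv_good:
  fixes W :: "'x::finite \<Rightarrow> 'y::finite \<Rightarrow> real"
  assumes "J \<in> cond_types n P" "good W J"
  shows "Fv W R P J = ereal (Gf W R P J)"
proof -
  obtain xs ys where l: "length xs = n" "length ys = n" "ltype xs = P" "J = jtype xs ys"
    using assms(1) by (rule cond_types_E)
  have nn: "\<forall>a. J a \<ge> 0" by (simp add: l jtype_def ltype_def)
  have mx: "\<forall>x. (\<Sum>y\<in>UNIV. J (x, y)) = P x" using margX_jtype[of xs ys] l by simp
  have m1: "max 0 (ereal t) = ereal (max 0 t)" for t
    by (cases "t \<ge> 0") (auto simp: max_def)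
  have m2: "ereal R - ereal t = ereal (R - t)" for t by simp
  have m3: "ereal a * ereal b = ereal (a * b)" "ereal a + ereal b = ereal (a + b)" for a b by simp_all
  show ?thesis unfolding Fv_def rel_ent_PW[OF assms(2) nn mx] rel_ent_PQ[OF nn mx] Gf_def
    by (simp only: m1 m2 m3)
qed

lemma Fv_bad:
  fixes W :: "'x::finite \<Rightarrow> 'y::finite \<Rightarrow> real"
  assumes "\<not> good W J" "\<forall>x y. W x y \<ge> 0"
  shows "Fv W R P J = \<infinity>"
proof -
  have a: "rel_ent J (\<lambda>(x, y). P x * W x y) = \<infinity>" by (rule rel_ent_bad[OF assms])
  define u where "u = max 0 (ereal R - rel_ent J (\<lambda>(x, y). P x * margY J y))"
  have u: "u \<ge> 0" by (simp add: u_def)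
  have h: "x \<ge> 0 \<Longrightarrow> \<infinity> + ereal (1/2) * x = \<infinity>" for x :: ereal
  proof (cases x)
    case (real r)
    assume "x \<ge> 0" then show ?thesis using real by simp
  next
    case PInf then show ?thesis by simp
  next
    case MInf
    assume "x \<ge> 0" then show ?thesis using MInf by simp
  qed
  show ?thesis unfolding Fv_def a u_def[symmetric] using h[OF u] .
qed

lemma bound_cond:
  fixes W :: "'x::finite \<Rightarrow> 'y::finite \<Rightarrow> real"
  assumes "J \<in> cond_types n P" "good W J" "n > 0"
  shows "lhs_term W R n P J > 0 \<and>
    \<bar>ln (lhs_term W R n P J) + real n * Gf W R P J\<bar> \<le> Cb CARD('x) CARD('y) CARD('x \<times> 'y) n"
proof -
  obtain xs ys where l: "length xs = n" "length ys = n" "ltype xs = P" "J = jtype xs ys"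
    using assms(1) by (rule cond_types_E)
  show ?thesis using main_bound[OF l(1,2) assms(3), of W R] assms(2) l by simp
qed



theorem lemma17:
  fixes W :: "'x::finite \<Rightarrow> 'y::finite \<Rightarrow> real" and P :: "'x \<Rightarrow> real"
    and m :: nat and R :: real
  assumes "\<forall>x y. W x y \<ge> 0" and "\<forall>x. (\<Sum>y\<in>UNIV. W x y) = 1"
    and "m > 0" and "is_type m P" and "R \<ge> 0"
  shows "(\<lambda>k. ereal (- (1 / real (m * k)) *
            ln (Max (lhs_term W R (m * k) P ` cond_types (m * k) P))))
         \<longlonglongrightarrow>
         (INF J\<in>(\<Union>k\<in>{1..}. cond_types (m * k) P).
            rel_ent J (\<lambda>(x, y). P x * W x y)
            + ereal (1/2) * max 0 (ereal R - rel_ent J (\<lambda>(x, y). P x * margY J y)))"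
proof -
  obtain xsP where xsP: "length xsP = m" "P = ltype xsP" using assms(4) by (auto simp: is_type_def)
  have ex: "\<exists>y. W x y > 0" for x
  proof (rule ccontr)
    assume "\<not> (\<exists>y. W x y > 0)"
    then have "\<forall>y. W x y = 0" using assms(1) by (simp add: not_less order_antisym)
    then have "(\<Sum>y\<in>UNIV. W x y) = 0" by simp
    then show False using assms(2) by simp
  qed
  define g where "g x = (SOME y. W x y > 0)" for x
  have gpos: "W x (g x) > 0" for x unfolding g_def using ex[of x] by (rule someI_ex)
  define ys1 where "ys1 = map g xsP"
  have g1: "good W (jtype xsP ys1)"
    unfolding good_def
  proof (intro allI impI)
    fix x y assume "jtype xsP ys1 (x,y) > 0"
    then have "count_list (zip xsP ys1) (x,y) \<noteq> 0" by (auto simp: jtype_def ltype_def zero_less_divide_iff)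
    then have "(x,y) \<in> set (zip xsP ys1)" by (simp add: count_list_0_iff)
    then have "y = g x" unfolding ys1_def by (rule zip_map_same)
    then show "W x y > 0" using gpos by simp
  qed
  have lys1: "length ys1 = m" by (simp add: ys1_def xsP)
  have laP: "length xsP = m * 1" using xsP by simp
  have lbP: "length ys1 = m * 1" using lys1 by simp
  have taP: "ltype xsP = P" using xsP by simp

  define f where "f = (\<lambda>k. ereal (- (1 / real (m * k)) *
            ln (Max (lhs_term W R (m * k) P ` cond_types (m * k) P))))"
  define U :: "('x \<times> 'y \<Rightarrow> real) set" where "U = (\<Union>k\<in>{1::nat..}. cond_types (m * k) P)"
  define L where "L = (INF J\<in>U. Fv W R P J)"
  define E where "E = (\<lambda>k. Cb CARD('x) CARD('y) CARD('x \<times> 'y) (m*k) / real (m*k))"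

  have key: "f k \<ge> L - ereal (E k) \<and> (\<forall>J\<in>cond_types (m*k) P. good W J \<longrightarrow> f k \<le> ereal (Gf W R P J + E k))"
    if k: "k \<ge> 1" for k
  proof -
    define n where "n = m * k"
    have n: "n > 0" using k assms(3) by (simp add: n_def)
    define A where "A = lhs_term W R n P ` cond_types n P"
    have qr: "0 * 1 + k > 0" using k by simp
    have w: "jtype (rep 0 xsP @ rep k xsP) (rep 0 ys1 @ rep k ys1) \<in> cond_types (m * (0 * 1 + k)) P
      \<and> good W (jtype (rep 0 xsP @ rep k xsP) (rep 0 ys1 @ rep k ys1))"
      using concat_pair[OF laP lbP taP xsP(1) lys1 taP g1 g1 assms(3) _ qr] by simp
    obtain Jw where Jw: "Jw \<in> cond_types n P" "good W Jw" using w by (auto simp: n_def)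
    have fin: "finite A" unfolding A_def by (intro finite_imageI finite_cond_types)
    have ne: "A \<noteq> {}" unfolding A_def using Jw(1) by auto
    obtain Js where Js: "Js \<in> cond_types n P" "lhs_term W R n P Js = Max A"
      using Max_in[OF fin ne] unfolding A_def by auto
    have wpos: "lhs_term W R n P Jw > 0" using bound_cond[OF Jw n] by simp
    have "lhs_term W R n P Jw \<le> Max A" using fin Jw(1) unfolding A_def by (intro Max_ge) auto
    then have Mpos: "Max A > 0" using wpos by simp
    have gs: "good W Js"
    proof (rule ccontr)
      assume "\<not> good W Js"
      then have "lhs_term W R n P Js = 0" by (rule lhs_bad[OF n _ assms(1)])
      then show False using Js(2) Mpos by simp
    qed
    have bs: "\<bar>ln (Max A) + real n * Gf W R P Js\<bar> \<le> Cb CARD('x) CARD('y) CARD('x \<times> 'y) n"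
      using bound_cond[OF Js(1) gs n, of R] Js(2) by simp
    have En: "E k = Cb CARD('x) CARD('y) CARD('x \<times> 'y) n / real n" by (simp add: E_def n_def)
    have fk: "f k = ereal (- (1 / real n) * ln (Max A))" by (simp add: f_def A_def n_def)
    have rn: "real n > 0" using n by simp
    have low: "Gf W R P Js - E k \<le> - (1 / real n) * ln (Max A)"
    proof -
      have "real n * Gf W R P Js - Cb CARD('x) CARD('y) CARD('x \<times> 'y) n \<le> - ln (Max A)" using bs by linarith
      then have h: "(real n * Gf W R P Js - Cb CARD('x) CARD('y) CARD('x \<times> 'y) n) / real n \<le> (- ln (Max A)) / real n"
        using rn by (intro divide_right_mono) auto
      have e1: "(real n * Gf W R P Js - Cb CARD('x) CARD('y) CARD('x \<times> 'y) n) / real n = Gf W R P Js - Cb CARD('x) CARD('y) CARD('x \<times> 'y) n / real n"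
        using rn by (simp add: diff_divide_distrib)
      have e2: "(- ln (Max A)) / real n = - (1 / real n) * ln (Max A)" by simp
      show ?thesis using h unfolding e1 e2 En .
    qed
    have "Js \<in> U" unfolding U_def using Js(1) k by (auto simp: n_def)
    then have "L \<le> Fv W R P Js" unfolding L_def by (rule INF_lower)
    also have "\<dots> = ereal (Gf W R P Js)" by (rule Fv_good[OF Js(1) gs])
    finally have "L - ereal (E k) \<le> ereal (Gf W R P Js) - ereal (E k)" by (intro ereal_minus_mono) auto
    also have "\<dots> = ereal (Gf W R P Js - E k)" by simp
    also have "\<dots> \<le> f k" unfolding fk using low by simp
    finally have part1: "L - ereal (E k) \<le> f k" .
    have part2: "f k \<le> ereal (Gf W R P J + E k)" if J: "J \<in> cond_types (m*k) P" "good W J" for J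
    proof -
      have J': "J \<in> cond_types n P" using J by (simp add: n_def)
      have bj: "lhs_term W R n P J > 0 \<and> \<bar>ln (lhs_term W R n P J) + real n * Gf W R P J\<bar> \<le> Cb CARD('x) CARD('y) CARD('x \<times> 'y) n"
        by (rule bound_cond[OF J' J(2) n])
      have "lhs_term W R n P J \<le> Max A" using fin J' unfolding A_def by (intro Max_ge) auto
      then have "ln (lhs_term W R n P J) \<le> ln (Max A)" using bj by simp
      then have "- ln (Max A) \<le> real n * Gf W R P J + Cb CARD('x) CARD('y) CARD('x \<times> 'y) n" using bj by linarith
      then have h: "(- ln (Max A)) / real n \<le> (real n * Gf W R P J + Cb CARD('x) CARD('y) CARD('x \<times> 'y) n) / real n"
        using rn by (intro divide_right_mono) auto
      have e1: "(real n * Gf W R P J + Cb CARD('x) CARD('y) CARD('x \<times> 'y) n) / real n = Gf W R P J + Cb CARD('x) CARD('y) CARD('x \<times> 'y) n / real n"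
        using rn by (simp add: add_divide_distrib)
      have e2: "(- ln (Max A)) / real n = - (1 / real n) * ln (Max A)" by simp
      have "- (1 / real n) * ln (Max A) \<le> Gf W R P J + E k" using h unfolding e1 e2 En .
      then show ?thesis unfolding fk by simp
    qed
    show ?thesis using part1 part2 by blast
  qed

  have Elim: "E \<longlonglongrightarrow> 0"
    unfolding E_def Cb_def errb_def of_nat_mult using assms(3) by real_asymp

  have "f \<longlonglongrightarrow> L"
  proof (rule order_tendstoI)
    fix a assume a: "a < L"
    obtain c where c: "a < ereal c" "ereal c < L" using ereal_dense2[OF a] by blast
    obtain c2 where c2: "ereal c < ereal c2" "ereal c2 < L" using ereal_dense2[OF c(2)] by blast
    have "0 < c2 - c" using c2 by simp
    then have ev: "eventually (\<lambda>k. E k < c2 - c) sequentially" using order_tendstoD(2)[OF Elim] by blast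
    show "eventually (\<lambda>k. a < f k) sequentially"
      using ev eventually_ge_at_top[of "1::nat"]
    proof eventually_elim
      case (elim k)
      have "ereal c2 - ereal (E k) \<le> L - ereal (E k)" using c2 by (intro ereal_minus_mono) auto
      also have "\<dots> \<le> f k" using key[OF elim(2)] by blast
      finally have "ereal (c2 - E k) \<le> f k" by simp
      moreover have "ereal c < ereal (c2 - E k)" using elim(1) by simp
      ultimately show "a < f k" using c(1) by (meson less_le_trans order.strict_trans)
    qed
  next
    fix a assume a: "L < a"
    then obtain J where J: "J \<in> U" "Fv W R P J < a" unfolding L_def by (auto simp: INF_less_iff)
    obtain k0 where k0: "k0 \<ge> 1" "J \<in> cond_types (m * k0) P" using J(1) unfolding U_def by auto
    have gJ: "good W J"
    proof (rule ccontr)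
      assume "\<not> good W J"
      then have "Fv W R P J = \<infinity>" by (rule Fv_bad[OF _ assms(1)])
      then show False using J(2) by simp
    qed
    have FJ: "Fv W R P J = ereal (Gf W R P J)" by (rule Fv_good[OF k0(2) gJ])
    obtain c where c: "ereal (Gf W R P J) < ereal c" "ereal c < a" using ereal_dense2 J(2) FJ by metis
    obtain xs0 ys0 where l0: "length xs0 = m * k0" "length ys0 = m * k0" "ltype xs0 = P" "J = jtype xs0 ys0"
      using k0(2) by (rule cond_types_E)
    define J1 where "J1 = jtype xsP ys1"
    define Jk where "Jk k = jtype (rep (k div k0) xs0 @ rep (k mod k0) xsP) (rep (k div k0) ys0 @ rep (k mod k0) ys1)" for k
    have k0p: "k0 > 0" using k0 by simp
    have Jk: "Jk k \<in> cond_types (m*k) P \<and> good W (Jk k) \<and> (\<forall>z. Jk k z = (real (k div k0 * k0) * J z + real (k mod k0) * J1 z) / real k)"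
      if k: "k \<ge> 1" for k
    proof -
      have e: "k div k0 * k0 + k mod k0 = k" by simp
      have qr: "k div k0 * k0 + k mod k0 > 0" using k by simp
      show ?thesis
        using concat_pair[OF l0(1) l0(2) l0(3) xsP(1) lys1 taP gJ[unfolded l0(4)] g1 assms(3) k0p qr]
        unfolding e Jk_def J1_def l0(4) by simp
    qed
    define \<beta> where "\<beta> k = real (k mod k0) / real k" for k
    have beta: "\<beta> \<longlonglongrightarrow> 0"
    proof (rule tendsto_sandwich[of "\<lambda>_. 0" _ _ "\<lambda>k. real k0 / real k"])
      show "eventually (\<lambda>k. 0 \<le> \<beta> k) sequentially" by (simp add: \<beta>_def)
      show "eventually (\<lambda>k. \<beta> k \<le> real k0 / real k) sequentially"
        using eventually_ge_at_top[of "1::nat"]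
      proof eventually_elim
        case (elim k)
        have "k mod k0 \<le> k0" using k0p by (simp add: less_imp_le)
        then show ?case unfolding \<beta>_def by (intro divide_right_mono) auto
      qed
      show "(\<lambda>_. 0::real) \<longlonglongrightarrow> 0" by simp
      show "(\<lambda>k. real k0 / real k) \<longlonglongrightarrow> 0" by (rule lim_const_over_n)
    qed
    have pw: "((\<lambda>k. Jk k z) \<longlongrightarrow> J z) sequentially" for z
    proof -
      have t: "((\<lambda>k. (1 - \<beta> k) * J z + \<beta> k * J1 z) \<longlongrightarrow> (1 - 0) * J z + 0 * J1 z) sequentially"
        by (intro tendsto_intros beta)
      have "eventually (\<lambda>k. (1 - \<beta> k) * J z + \<beta> k * J1 z = Jk k z) sequentially"
        using eventually_ge_at_top[of "1::nat"]
      proof eventually_elim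
        case (elim k)
        have rk: "real k > 0" using elim by simp
        have d: "real (k div k0 * k0) = real k - real (k mod k0)"
          by (metis add_diff_cancel_right' div_mult_mod_eq of_nat_add)
        have v: "Jk k z = (real (k div k0 * k0) * J z + real (k mod k0) * J1 z) / real k"
          using Jk[OF elim] by blast
        show ?case unfolding v d \<beta>_def using rk by (simp add: field_simps)
      qed
      from Lim_transform_eventually[OF t this] show ?thesis by simp
    qed
    have Gl: "((\<lambda>k. Gf W R P (Jk k) + E k) \<longlongrightarrow> Gf W R P J + 0) sequentially"
      by (intro tendsto_add Gf_tendsto pw Elim)
    have "Gf W R P J + 0 < c" using c(1) by simp
    then have ev: "eventually (\<lambda>k. Gf W R P (Jk k) + E k < c) sequentially"
      using order_tendstoD(2)[OF Gl] by blast
    show "eventually (\<lambda>k. f k < a) sequentially"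
      using ev eventually_ge_at_top[of "1::nat"]
    proof eventually_elim
      case (elim k)
      have "f k \<le> ereal (Gf W R P (Jk k) + E k)" using key[OF elim(2)] Jk[OF elim(2)] by blast
      also have "\<dots> < ereal c" using elim(1) by simp
      finally show ?case using c(2) by simp
    qed
  qed
  then show ?thesis unfolding f_def L_def U_def Fv_def .
qed

end
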